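(* Consider an instance of the Submodular Prophet Inequality problem with non-negative submodular objective $f:2^{\mathcal{U}}\to\mathbb{R}_{\ge0}$ and constraint $(\mathcal{N},\mathcal{I})$, and let $\mathcal{P}$ be a polyhedral relaxation of $(\mathcal{N},\mathcal{I})$. Then \[\max_{\bm{z}\in\mathcal{P}''} f^+(\bm{z})\ \ge\ \mathrm{OPT}.\]
   Context: Submodular Prophet Inequality instance: $\mathcal{N}=[n]$; independent random variables $X_1,\dots,X_n$, $X_i$ taking values in a finite set $\mathcal{U}_i$ with distribution $D_i$; the $\mathcal{U}_i$ are pairwise disjoint, $\mathcal{U}=\bigcup_i\mathcal{U}_i$, $\mathcal{D}(e)=D_i(e)=\Pr[X_i=e]$ for $e\in\mathcal{U}_i$; $f$ is non-negative submodular ($f(A)+f(B)\ge f(A\cup B)+f(A\cap B)$, $f(\emptyset)=0$); $\mathcal{I}\subseteq2^{\mathcal{N}}$ is downward-closed. Prophet's value $\mathrm{OPT}=\mathbb{E}[\max_{T\in\mathcal{I}}f(\{X_i:i\in T\})]$. A polyhedral relaxation is a convex polytope $\mathcal{P}\subseteq[0,1]^{\mathcal{N}}$ containing $\mathbf{1}_T$ for all $T\in\mathcal{I}$. $\mathcal{P}'=\{\bm{y}\in[0,1]^{\mathcal{U}}:\exists\bm{x}\in\mathcal{P},\ \sum_{e\in\mathcal{U}_i}y_e=x_i\ \forall i\}$, $\mathcal{P}''=\{\bm{z}\in\mathcal{P}':z_e\le\mathcal{D}(e)\ \forall e\in\mathcal{U}\}$. Concave closure: $f^+(\bm{z})=\max\{\sum_{S\subseteq\mathcal{U}}a_Sf(S):a_S\ge0,\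 \sum_Sa_S=1,\ \sum_Sa_S\mathbf{1}_S=\bm{z}\}$. *)

theory Defs
  imports "HOL-Analysis.Analysis" "HOL-Probability.Product_PMF"
begin

text \<open>Ground set N is the finite type 'n (N = UNIV); the universe U of all
  possible realisations is the finite type 'u (U = UNIV), partitioned into the
  disjoint sets Us i (i in N).\<close>

definition submodular :: "('u set \<Rightarrow> real) \<Rightarrow> bool" where
  "submodular f \<longleftrightarrow> (\<forall>A B. f A + f B \<ge> f (A \<union> B) + f (A \<inter> B))"

definition downward_closed :: "'n set set \<Rightarrow> bool" where
  "downward_closed I \<longleftrightarrow> (\<forall>T \<in> I. \<forall>S. S \<subseteq> T \<longrightarrow> S \<in> I)"

definition indic_vec :: "'a set \<Rightarrow> real ^ ('a::finite)" where
  "indic_vec T = (\<chi> i. if i \<in> T then 1 else 0)"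

definition unit_cube :: "(real ^ ('a::finite)) set" where
  "unit_cube = {x. \<forall>i. 0 \<le> x $ i \<and> x $ i \<le> 1}"

definition polyhedral_relaxation :: "(real ^ ('n::finite)) set \<Rightarrow> 'n set set \<Rightarrow> bool" where
  "polyhedral_relaxation P I \<longleftrightarrow>
     polytope P \<and> P \<subseteq> unit_cube \<and> (\<forall>T \<in> I. indic_vec T \<in> P)"

definition P' :: "(real ^ ('n::finite)) set \<Rightarrow> ('n \<Rightarrow> ('u::finite) set) \<Rightarrow> (real ^ 'u) set" where
  "P' P Us = {y \<in> unit_cube. \<exists>x \<in> P. \<forall>i. (\<Sum>e \<in> Us i. y $ e) = x $ i}"

definition Dist :: "('n \<Rightarrow> 'u set) \<Rightarrow> ('n \<Rightarrow> 'u pmf) \<Rightarrow> 'u \<Rightarrow> real" where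
  "Dist Us D e = pmf (D (THE i. e \<in> Us i)) e"

definition P'' :: "(real ^ ('n::finite)) set \<Rightarrow> ('n \<Rightarrow> ('u::finite) set) \<Rightarrow> ('n \<Rightarrow> 'u pmf) \<Rightarrow> (real ^ 'u) set" where
  "P'' P Us D = {z \<in> P' P Us. \<forall>e. z $ e \<le> Dist Us D e}"

text \<open>Concave closure f^+ (the maximum exists; Sup is used to denote it).\<close>
definition concave_closure :: "(('u::finite) set \<Rightarrow> real) \<Rightarrow> real ^ 'u \<Rightarrow> real" where
  "concave_closure f z = Sup {(\<Sum>S\<in>UNIV. a S * f S) | a.
      (\<forall>S. a S \<ge> 0) \<and> (\<Sum>S\<in>UNIV. a S) = 1 \<and> (\<Sum>S\<in>UNIV. a S *\<^sub>R indic_vec S) = z}"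

definition prophet_OPT :: "('u set \<Rightarrow> real) \<Rightarrow> ('n::finite) set set \<Rightarrow> ('n \<Rightarrow> 'u pmf) \<Rightarrow> real" where
  "prophet_OPT f I D = measure_pmf.expectation (Pi_pmf UNIV undefined D)
      (\<lambda>X. Max ((\<lambda>T. f (X ` T)) ` I))"

end

theory Submission
  imports Defs
begin

theorem claim1:
  fixes f :: "('u::finite) set \<Rightarrow> real"
    and I :: "('n::finite) set set"
    and Us :: "'n \<Rightarrow> 'u set"
    and D :: "'n \<Rightarrow> 'u pmf"
    and P :: "(real ^ 'n) set"
  assumes disj: "\<And>i j. i \<noteq> j \<Longrightarrow> Us i \<inter> Us j = {}"
    and cover: "(\<Union>i. Us i) = UNIV"
    and supp: "\<And>i. set_pmf (D i) \<subseteq> Us i"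
    and nonneg: "\<And>A. f A \<ge> 0"
    and f_empty: "f {} = 0"
    and submod: "submodular f"
    and dc: "downward_closed I"
    and I_nonempty: "{} \<in> I"
    and relax: "polyhedral_relaxation P I"
  shows "\<exists>z \<in> P'' P Us D. concave_closure f z \<ge> prophet_OPT f I D"
proof -
  define Q where "Q = Pi_pmf (UNIV::'n set) undefined D"
  define p where "p X = pmf Q X" for X
  have suppQ: "X \<in> set_pmf Q \<Longrightarrow> X i \<in> Us i" for X i
    using set_Pi_pmf_subset'[of "UNIV::'n set" undefined D] supp unfolding Q_def PiE_dflt_def by force
  have exT: "\<forall>X. \<exists>T. T \<in> I \<and> f (X ` T) = Max ((\<lambda>T. f (X ` T)) ` I)"
  proof
    fix X :: "'n \<Rightarrow> 'u"
    have "Max ((\<lambda>T. f (X ` T)) ` I) \<in> (\<lambda>T. f (X ` T)) ` I" using I_nonempty by (intro Max_in) auto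
    then show "\<exists>T. T \<in> I \<and> f (X ` T) = Max ((\<lambda>T. f (X ` T)) ` I)" by force
  qed
  then obtain T where T: "\<And>X. T X \<in> I" "\<And>X. f (X ` T X) = Max ((\<lambda>T. f (X ` T)) ` I)" by metis
  define g where "g X = X ` T X" for X
  define W where "W = map_pmf g Q"
  have key: "(\<Sum>S\<in>UNIV. pmf W S *\<^sub>R h S) = (\<Sum>X\<in>UNIV. p X *\<^sub>R h (g X))"
    for h :: "'u set \<Rightarrow> 'b::{banach, second_countable_topology}"
  proof -
    have "(\<Sum>S\<in>UNIV. pmf W S *\<^sub>R h S) = (LINT S|W. h S)" by (rule integral_measure_pmf[symmetric]) auto
    also have "\<dots> = (LINT X|Q. h (g X))" unfolding W_def by simp
    also have "\<dots> = (\<Sum>X\<in>UNIV. p X *\<^sub>R h (g X))" unfolding p_def by (rule integral_measure_pmf) auto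
    finally show ?thesis .
  qed
  have sump: "(\<Sum>X\<in>UNIV. p X) = 1" unfolding p_def by (rule sum_pmf_eq_1) auto
  have p0: "p X \<ge> 0" for X unfolding p_def by simp
  define z where "z = (\<Sum>X\<in>UNIV. p X *\<^sub>R indic_vec (g X))"
  define x where "x = (\<Sum>X\<in>UNIV. p X *\<^sub>R indic_vec (T X))"
  have zc: "z $ e = (\<Sum>X\<in>UNIV. p X * (if e \<in> g X then 1 else 0))" for e
    unfolding z_def indic_vec_def by simp
  have xc: "x $ i = (\<Sum>X\<in>UNIV. p X * (if i \<in> T X then 1 else 0))" for i
    unfolding x_def indic_vec_def by simp
  have xP: "x \<in> P"
    unfolding x_def
    apply (rule convex_sum) using relax T(1) sump p0 by (auto simp: polyhedral_relaxation_def polytope_imp_convex)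
  have cube: "z \<in> unit_cube"
    unfolding unit_cube_def
  proof (intro allI conjI CollectI)
    fix e
    show "0 \<le> z $ e" unfolding zc using p0 by (intro sum_nonneg) auto
    have "z $ e \<le> (\<Sum>X\<in>UNIV. p X)" unfolding zc using p0 by (intro sum_mono) auto
    then show "z $ e \<le> 1" using sump by simp
  qed
  have Ueq: "Us i \<inter> g X = (if i \<in> T X then {X i} else {})" if "p X \<noteq> 0" for X i
  proof -
    have sX: "X \<in> set_pmf Q" using that unfolding p_def by (simp add: set_pmf_iff)
    have ji: "j = i" if "X j \<in> Us i" for j
      using suppQ[OF sX, of j] disj[of j i] that by blast
    have Xi: "X i \<in> Us i" using suppQ[OF sX] .
    show ?thesis
    proof (cases "i \<in> T X")
      case True
      then show ?thesis unfolding g_def using ji Xi by auto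
    next
      case False
      have "Us i \<inter> X ` T X = {}"
      proof (rule equals0I)
        fix e assume "e \<in> Us i \<inter> X ` T X"
        then obtain j where "j \<in> T X" "X j \<in> Us i" by blast
        then show False using ji False by blast
      qed
      then show ?thesis unfolding g_def using False by simp
    qed
  qed
  have sums: "(\<Sum>e\<in>Us i. z $ e) = x $ i" for i
  proof -
    have "(\<Sum>e\<in>Us i. z $ e) = (\<Sum>X\<in>UNIV. p X * (\<Sum>e\<in>Us i. if e \<in> g X then 1 else 0))"
      unfolding zc by (subst sum.swap) (simp add: sum_distrib_left)
    also have "\<dots> = (\<Sum>X\<in>UNIV. p X * (if i \<in> T X then 1 else 0))"
    proof (rule sum.cong[OF refl])
      fix X
      show "p X * (\<Sum>e\<in>Us i. if e \<in> g X then 1 else 0) = p X * (if i \<in> T X then 1 else 0)"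
      proof (cases "p X = 0")
        case False
        have "(\<Sum>e\<in>Us i. if e \<in> g X then 1 else 0 :: real) = real (card (Us i \<inter> g X))"
          by (simp add: sum.If_cases Int_def)
        then show ?thesis using Ueq[OF False] by auto
      qed simp
    qed
    finally show ?thesis using xc by simp
  qed
  have dist: "z $ e \<le> Dist Us D e" for e
  proof -
    obtain i0 where i0: "e \<in> Us i0" using cover by auto
    have the: "(THE i. e \<in> Us i) = i0" using i0 disj by (intro the_equality) auto
    have "z $ e \<le> (\<Sum>X\<in>UNIV. p X * (if X i0 = e then 1 else 0))"
      unfolding zc
    proof (intro sum_mono)
      fix X
      show "p X * (if e \<in> g X then 1 else 0) \<le> p X * (if X i0 = e then 1 else 0)"
      proof (cases "p X = 0")
        case False
        then have sX: "X \<in> set_pmf Q" unfolding p_def by (simp add: set_pmf_iff)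
        have "X i0 = e" if eg: "e \<in> g X"
        proof -
          obtain j where j: "e = X j" using eg unfolding g_def by blast
          have "X j \<in> Us j" using suppQ[OF sX] .
          then have "j = i0" using disj[of j i0] i0 j by blast
          then show ?thesis using j by simp
        qed
        then show ?thesis using p0[of X] by auto
      qed simp
    qed
    also have "\<dots> = (\<Sum>X\<in>UNIV. if X i0 = e then p X else 0)" by (intro sum.cong) auto
    also have "\<dots> = (\<Sum>X\<in>{X. X i0 = e}. p X)" by (simp add: sum.inter_filter[symmetric])
    also have "\<dots> = measure_pmf.prob Q {X. X i0 = e}" unfolding p_def by (simp add: measure_measure_pmf_finite)
    also have "\<dots> = measure_pmf.prob (map_pmf (\<lambda>X. X i0) Q) {e}" by (simp add: vimage_def)
    also have "\<dots> = pmf (D i0) e" unfolding Q_def by (simp add: Pi_pmf_component measure_pmf_single)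
    finally show ?thesis unfolding Dist_def the .
  qed
  have zP: "z \<in> P'' P Us D"
    unfolding P''_def P'_def using cube sums xP dist by auto
  have OPTeq: "prophet_OPT f I D = (\<Sum>X\<in>UNIV. p X * f (g X))"
  proof -
    have "prophet_OPT f I D = (\<Sum>X\<in>UNIV. Max ((\<lambda>T. f (X ` T)) ` I) * pmf Q X)"
      unfolding prophet_OPT_def Q_def by (rule integral_measure_pmf_real) auto
    also have "\<dots> = (\<Sum>X\<in>UNIV. p X * f (g X))" by (simp add: T(2) p_def g_def mult.commute)
    finally show ?thesis .
  qed
  define C where "C = {(\<Sum>S\<in>UNIV. a S * f S) | a.
      (\<forall>S. a S \<ge> 0) \<and> (\<Sum>S\<in>UNIV. a S) = 1 \<and> (\<Sum>S\<in>UNIV. a S *\<^sub>R indic_vec S) = z}"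
  define a where "a S = pmf W S" for S
  have mem: "(\<Sum>S\<in>UNIV. a S * f S) \<in> C"
  proof -
    have "(\<Sum>S\<in>UNIV. a S) = 1" unfolding a_def by (rule sum_pmf_eq_1) auto
    moreover have "(\<Sum>S\<in>UNIV. a S *\<^sub>R indic_vec S) = z" unfolding a_def z_def by (rule key)
    ultimately show ?thesis unfolding C_def by (auto simp: a_def)
  qed
  have val: "(\<Sum>S\<in>UNIV. a S * f S) = (\<Sum>X\<in>UNIV. p X * f (g X))" using key[of f] by (simp add: a_def)
  have bdd: "bdd_above C"
  proof (rule bdd_aboveI)
    fix v assume "v \<in> C"
    then obtain b where b: "\<forall>S. b S \<ge> 0" "(\<Sum>S\<in>UNIV. b S) = 1" and v: "v = (\<Sum>S\<in>UNIV. b S * f S)"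
      unfolding C_def by blast
    have "v \<le> (\<Sum>S\<in>UNIV. b S * Max (range f))" unfolding v using b
      by (intro sum_mono mult_left_mono) auto
    also have "\<dots> = Max (range f)" using b by (simp add: sum_distrib_right[symmetric])
    finally show "v \<le> Max (range f)" .
  qed
  have "concave_closure f z \<ge> prophet_OPT f I D"
    unfolding concave_closure_def C_def[symmetric] OPTeq val[symmetric]
    using cSup_upper[OF mem bdd] .
  then show ?thesis using zP by blast
qed

end
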